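(* The set $\overline{P_2}$ of reduced words over $\{a,b,a^{-1},b^{-1}\}$ representing primitive elements of $F_2$ is not a context-free language.
   Context: $F_2$ is the free group on $\{a,b\}$; an element is primitive if it belongs to some basis of $F_2$. A word is reduced if it has no factor $xx^{-1}$ with $x\in\{a,b,a^{-1},b^{-1}\}$. *)

theory Defs
  imports Main
begin

datatype letter = Ga | Gb | GaInv | GbInv

fun inv_letter :: "letter \<Rightarrow> letter" where
  "inv_letter Ga = GaInv"
| "inv_letter Gb = GbInv"
| "inv_letter GaInv = Ga"
| "inv_letter GbInv = Gb"

definition reduced :: "letter list \<Rightarrow> bool" where
  "reduced w \<longleftrightarrow> \<not> (\<exists>u v x. w = u @ [x, inv_letter x] @ v)"

fun red_cons :: "letter \<Rightarrow> letter list \<Rightarrow> letter list" where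
  "red_cons x [] = [x]"
| "red_cons x (y # ys) = (if y = inv_letter x then ys else x # y # ys)"

definition reduce :: "letter list \<Rightarrow> letter list" where
  "reduce w = foldr red_cons w []"

text \<open>Elements of F_2 are represented by reduced words; the inverse of a word.\<close>
definition inv_word :: "letter list \<Rightarrow> letter list" where
  "inv_word w = rev (map inv_letter w)"

fun img :: "letter list \<Rightarrow> letter list \<Rightarrow> letter \<Rightarrow> letter list" where
  "img u v Ga = u"
| "img u v Gb = v"
| "img u v GaInv = inv_word u"
| "img u v GbInv = inv_word v"

definition endo :: "letter list \<Rightarrow> letter list \<Rightarrow> letter list \<Rightarrow> letter list" where
  "endo u v w = reduce (concat (map (img u v) w))"

text \<open>(u, v) is a basis of F_2 iff the endomorphism a \<mapsto> u, b \<mapsto> v is an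
  automorphism, i.e. bijective on F_2 (= reduced words).\<close>
definition is_basis :: "letter list \<Rightarrow> letter list \<Rightarrow> bool" where
  "is_basis u v \<longleftrightarrow> reduced u \<and> reduced v \<and>
     bij_betw (endo u v) {w. reduced w} {w. reduced w}"

definition primitive :: "letter list \<Rightarrow> bool" where
  "primitive w \<longleftrightarrow> (\<exists>v. is_basis w v \<or> is_basis v w)"

definition primitive_reduced_words :: "letter list set" where
  "primitive_reduced_words = {w. reduced w \<and> primitive w}"

text \<open>A grammar: a set of productions (A, alpha) with nonterminals nat and
  sentential forms over nonterminals (Inl) and terminals (Inr).\<close>
definition cfg_step :: "(nat \<times> (nat + 'a) list) set \<Rightarrow> (nat + 'a) list \<Rightarrow> (nat + 'a) list \<Rightarrow> bool" where
  "cfg_step P x y \<longleftrightarrow> (\<exists>l r A \<alpha>. x = l @ [Inl A] @ r \<and> (A, \<alpha>) \<in> P \<and> y = l @ \<alpha> @ r)"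

definition cfg_lang :: "(nat \<times> (nat + 'a) list) set \<Rightarrow> nat \<Rightarrow> 'a list set" where
  "cfg_lang P S = {w. (cfg_step P)\<^sup>*\<^sup>* [Inl S] (map Inr w)}"

definition context_free :: "'a list set \<Rightarrow> bool" where
  "context_free L \<longleftrightarrow> (\<exists>P S. finite P \<and> L = cfg_lang P S)"

end

theory Submission
  imports Defs "HOL-Number_Theory.Number_Theory"
begin


lemma inv_inv[simp]: "inv_letter (inv_letter x) = x" by (cases x) auto
lemma inv_neq[simp]: "inv_letter x \<noteq> x" by (cases x) auto

lemma reduced_Nil[simp]: "reduced []" unfolding reduced_def by auto
lemma reduced_Cons: "reduced (x # w) \<longleftrightarrow> reduced w \<and> (w = [] \<or> hd w \<noteq> inv_letter x)"
proof
  assume r: "reduced (x # w)"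
  have "reduced w"
    unfolding reduced_def
  proof
    assume "\<exists>u v y. w = u @ [y, inv_letter y] @ v"
    then obtain u v y where "w = u @ [y, inv_letter y] @ v" by blast
    hence "x # w = (x#u) @ [y, inv_letter y] @ v" by simp
    thus False using r unfolding reduced_def by blast
  qed
  moreover have "w = [] \<or> hd w \<noteq> inv_letter x"
  proof (rule ccontr)
    assume "\<not> (w = [] \<or> hd w \<noteq> inv_letter x)"
    then obtain w' where "w = inv_letter x # w'" by (cases w) auto
    hence "x # w = [] @ [x, inv_letter x] @ w'" by simp
    thus False using r unfolding reduced_def by blast
  qed
  ultimately show "reduced w \<and> (w = [] \<or> hd w \<noteq> inv_letter x)" by blast
next
  assume h: "reduced w \<and> (w = [] \<or> hd w \<noteq> inv_letter x)"
  show "reduced (x # w)" unfolding reduced_def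
  proof
    assume "\<exists>u v y. x # w = u @ [y, inv_letter y] @ v"
    then obtain u v y where e: "x # w = u @ [y, inv_letter y] @ v" by blast
    show False
    proof (cases u)
      case Nil thus False using e h by auto
    next
      case (Cons c u') thus False using e h unfolding reduced_def by auto
    qed
  qed
qed

lemma reduced_red_cons: "reduced w \<Longrightarrow> reduced (red_cons x w)"
  by (cases w) (auto simp: reduced_Cons)

abbreviation F :: "letter list \<Rightarrow> letter list \<Rightarrow> letter list" where
  "F s r \<equiv> foldr red_cons s r"

lemma reduced_F: "reduced r \<Longrightarrow> reduced (F s r)"
  by (induction s) (auto intro: reduced_red_cons)

lemma reduced_reduce[simp]: "reduced (reduce w)"
  unfolding reduce_def by (rule reduced_F) simp

lemma reduce_Cons: "reduce (x # w) = red_cons x (reduce w)"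
  unfolding reduce_def by simp

lemma reduce_append: "reduce (s @ r) = F s (reduce r)"
  unfolding reduce_def by simp

lemma reduce_reduced: "reduced w \<Longrightarrow> reduce w = w"
proof (induction w)
  case Nil thus ?case by (simp add: reduce_def)
next
  case (Cons x w)
  hence r: "reduced w" and h: "w = [] \<or> hd w \<noteq> inv_letter x" by (auto simp: reduced_Cons)
  have "reduce (x # w) = red_cons x w" using Cons r by (simp add: reduce_Cons)
  also have "\<dots> = x # w" using h by (cases w) auto
  finally show ?case .
qed

lemma reduce_reduce[simp]: "reduce (reduce w) = reduce w"
  by (simp add: reduce_reduced)

lemma red_cons_cancel: "reduced t \<Longrightarrow> red_cons x (red_cons (inv_letter x) t) = t"
proof (cases t)
  case Nil thus ?thesis by simp
next
  case (Cons y t')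
  assume r: "reduced t"
  show ?thesis
  proof (cases "y = x")
    case True
    with Cons r show ?thesis by (cases t') (auto simp: reduced_Cons)
  next
    case False
    with Cons show ?thesis by simp
  qed
qed

lemma red_cons_F: "reduced r \<Longrightarrow> red_cons x (F s r) = F (red_cons x s) r"
proof (cases s)
  case Nil thus ?thesis by simp
next
  case (Cons y s')
  assume r: "reduced r"
  show ?thesis
  proof (cases "y = inv_letter x")
    case True
    have "red_cons x (F s r) = red_cons x (red_cons (inv_letter x) (F s' r))" using Cons True by simp
    also have "\<dots> = F s' r" by (rule red_cons_cancel[OF reduced_F[OF r]])
    finally show ?thesis using Cons True by simp
  next
    case False thus ?thesis using Cons by simp
  qed
qed

lemma F_reduce: "reduced r \<Longrightarrow> F s r = F (reduce s) r"
proof (induction s)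
  case Nil thus ?case by (simp add: reduce_def)
next
  case (Cons x s)
  have "F (x # s) r = red_cons x (F (reduce s) r)" using Cons by simp
  also have "\<dots> = F (red_cons x (reduce s)) r" by (rule red_cons_F[OF Cons.prems])
  finally show ?case by (simp add: reduce_Cons)
qed

lemma reduce_append_left: "reduce (s @ r) = reduce (reduce s @ r)"
  by (simp add: reduce_append F_reduce[of "reduce r" s])

lemma reduce_append_right: "reduce (s @ r) = reduce (s @ reduce r)"
  by (simp add: reduce_append)

lemma reduce_cong:
  "reduce a = reduce a' \<Longrightarrow> reduce b = reduce b' \<Longrightarrow> reduce (a @ b) = reduce (a' @ b')"
  by (metis reduce_append_left reduce_append_right)

lemma inv_word_Nil[simp]: "inv_word [] = []" by (simp add: inv_word_def)
lemma inv_word_Cons: "inv_word (x # w) = inv_word w @ [inv_letter x]" by (simp add: inv_word_def)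
lemma inv_word_append: "inv_word (a @ b) = inv_word b @ inv_word a" by (simp add: inv_word_def)
lemma inv_word_inv_word[simp]: "inv_word (inv_word w) = w" by (simp add: inv_word_def rev_map comp_def)

lemma reduce_inv_self: "reduce (inv_word s @ s) = []"
proof (induction s)
  case Nil thus ?case by (simp add: reduce_def)
next
  case (Cons x s)
  have "reduce (inv_word (x # s) @ x # s) = F (inv_word s) (red_cons (inv_letter x) (red_cons x (reduce s)))"
    by (simp add: inv_word_Cons reduce_append reduce_Cons)
  also have "\<dots> = F (inv_word s) (reduce s)"
    using red_cons_cancel[of "reduce s" "inv_letter x"] by simp
  also have "\<dots> = []" using Cons by (simp add: reduce_append)
  finally show ?case .
qed

lemma reduce_self_inv: "reduce (s @ inv_word s) = []"
  using reduce_inv_self[of "inv_word s"] by simp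

lemma reduce_Nil[simp]: "reduce [] = []" by (simp add: reduce_def)

lemma reduce_cancel1: "reduce (s @ inv_word s @ r) = reduce r"
proof -
  have "reduce (s @ inv_word s @ r) = reduce (reduce (s @ inv_word s) @ r)"
    by (metis append_assoc reduce_append_left)
  thus ?thesis by (simp only: reduce_self_inv append_Nil)
qed

lemma reduce_cancel2: "reduce (inv_word s @ s @ r) = reduce r"
  using reduce_cancel1[of "inv_word s" r] by simp



definition sbst :: "letter list \<Rightarrow> letter list \<Rightarrow> letter list \<Rightarrow> letter list" where
  "sbst u v w = concat (map (img u v) w)"

lemma sbst_Nil[simp]: "sbst u v [] = []" by (simp add: sbst_def)
lemma sbst_Cons[simp]: "sbst u v (x # w) = img u v x @ sbst u v w" by (simp add: sbst_def)
lemma sbst_append[simp]: "sbst u v (a @ b) = sbst u v a @ sbst u v b" by (simp add: sbst_def)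

lemma endo_sbst: "endo u v w = reduce (sbst u v w)" by (simp add: endo_def sbst_def)

lemma img_inv: "img u v (inv_letter x) = inv_word (img u v x)"
  by (cases x) auto

lemma sbst_inv: "sbst u v (inv_word s) = inv_word (sbst u v s)"
  by (induction s) (auto simp: inv_word_Cons inv_word_append img_inv)

lemma sbst_red_cons: "reduce (sbst u v (red_cons x t)) = reduce (img u v x @ sbst u v t)"
proof (cases t)
  case Nil thus ?thesis by simp
next
  case (Cons y t')
  show ?thesis
  proof (cases "y = inv_letter x")
    case True
    have "reduce (img u v x @ sbst u v t) = reduce (img u v x @ inv_word (img u v x) @ sbst u v t')"
      using Cons True by (simp add: img_inv)
    also have "\<dots> = reduce (sbst u v t')" by (rule reduce_cancel1)
    finally show ?thesis using Cons True by simp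
  next
    case False thus ?thesis using Cons by simp
  qed
qed

lemma sbst_reduce: "reduce (sbst u v (reduce w)) = reduce (sbst u v w)"
proof (induction w)
  case Nil thus ?case by simp
next
  case (Cons x w)
  have "reduce (sbst u v (reduce (x # w))) = reduce (img u v x @ sbst u v (reduce w))"
    by (simp add: reduce_Cons sbst_red_cons)
  also have "\<dots> = reduce (img u v x @ reduce (sbst u v (reduce w)))" by (rule reduce_append_right)
  also have "\<dots> = reduce (img u v x @ reduce (sbst u v w))" using Cons by simp
  also have "\<dots> = reduce (sbst u v (x # w))" by (simp flip: reduce_append_right)
  finally show ?case .
qed

lemma reduce_inv_cong: "reduce a = reduce b \<Longrightarrow> reduce (inv_word a) = reduce (inv_word b)"
proof -
  assume h: "reduce a = reduce b"
  have "reduce (inv_word a @ b @ inv_word b) = reduce (inv_word a)"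
    by (metis append_Nil2 reduce_append_right reduce_self_inv reduce_Nil)
  moreover have "reduce (inv_word a @ b @ inv_word b) = reduce (inv_word b)"
  proof -
    have "reduce (inv_word a @ b) = []"
      by (metis h reduce_append_right reduce_inv_self)
    thus ?thesis by (metis append_Nil append_assoc reduce_append_left)
  qed
  ultimately show ?thesis by simp
qed

lemma reduce_concat_cong:
  assumes "\<And>x. reduce (f x) = reduce (g x)"
  shows "reduce (concat (map f w)) = reduce (concat (map g w))"
proof (induction w)
  case Nil thus ?case by simp
next
  case (Cons x w) thus ?case by (simp add: reduce_cong[OF assms Cons.IH])
qed

lemma endo_comp:
  "endo u v (endo u' v' w) = endo (endo u v u') (endo u v v') w"
proof -
  have "endo u v (endo u' v' w) = reduce (sbst u v (sbst u' v' w))"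
    by (simp add: endo_sbst sbst_reduce)
  also have "sbst u v (sbst u' v' w) = concat (map (\<lambda>x. sbst u v (img u' v' x)) w)"
    by (induction w) auto
  also have "reduce \<dots> = reduce (concat (map (img (endo u v u') (endo u v v')) w))"
  proof (rule reduce_concat_cong)
    fix x
    have i: "\<And>a. reduce (sbst u v (inv_word a)) = reduce (inv_word (endo u v a))"
      unfolding sbst_inv endo_sbst by (rule reduce_inv_cong) simp
    show "reduce (sbst u v (img u' v' x)) = reduce (img (endo u v u') (endo u v v') x)"
      by (cases x) (simp_all only: img.simps i, simp_all add: endo_sbst)
  qed
  finally show ?thesis by (simp add: endo_def)
qed

lemma endo_id: "reduced w \<Longrightarrow> endo [Ga] [Gb] w = w"
proof -
  assume "reduced w"
  moreover have "sbst [Ga] [Gb] w = w"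
  proof -
    have "\<And>x. img [Ga] [Gb] x = [x]" by (case_tac x) (auto simp: inv_word_def)
    thus ?thesis by (induction w) auto
  qed
  ultimately show ?thesis by (simp add: endo_sbst reduce_reduced)
qed

lemma endo_reduced: "reduced (endo u v w)" by (simp add: endo_sbst)

lemma basis_by_inverse:
  assumes "reduced u" "reduced v"
    and "endo u v s = [Ga]" "endo u v t = [Gb]"
    and "endo s t u = [Ga]" "endo s t v = [Gb]"
  shows "is_basis u v"
  unfolding is_basis_def
proof (intro conjI assms(1,2))
  show "bij_betw (endo u v) {w. reduced w} {w. reduced w}"
  proof (rule bij_betw_byWitness[where f' = "endo s t"])
    show "\<forall>a\<in>{w. reduced w}. endo s t (endo u v a) = a"
      using assms endo_id by (simp only: endo_comp mem_Collect_eq) blast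
    show "\<forall>a'\<in>{w. reduced w}. endo u v (endo s t a') = a'"
      using assms endo_id by (simp only: endo_comp mem_Collect_eq) blast
    show "endo u v ` {w. reduced w} \<subseteq> {w. reduced w}" by (auto simp: endo_reduced)
    show "endo s t ` {w. reduced w} \<subseteq> {w. reduced w}" by (auto simp: endo_reduced)
  qed
qed



section \<open>Abelianization\<close>

fun fa :: "letter \<Rightarrow> int" where
  "fa Ga = 1" | "fa GaInv = -1" | "fa Gb = 0" | "fa GbInv = 0"
fun fb :: "letter \<Rightarrow> int" where
  "fb Gb = 1" | "fb GbInv = -1" | "fb Ga = 0" | "fb GaInv = 0"

definition ea :: "letter list \<Rightarrow> int" where "ea w = sum_list (map fa w)"
definition eb :: "letter list \<Rightarrow> int" where "eb w = sum_list (map fb w)"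

lemma ea_simps[simp]: "ea [] = 0" "ea (x # w) = fa x + ea w" "ea (a @ b) = ea a + ea b"
  by (auto simp: ea_def)
lemma eb_simps[simp]: "eb [] = 0" "eb (x # w) = fb x + eb w" "eb (a @ b) = eb a + eb b"
  by (auto simp: eb_def)

lemma fa_inv[simp]: "fa (inv_letter x) = - fa x" by (cases x) auto
lemma fb_inv[simp]: "fb (inv_letter x) = - fb x" by (cases x) auto

lemma ea_inv[simp]: "ea (inv_word w) = - ea w" by (induction w) (auto simp: inv_word_Cons)
lemma eb_inv[simp]: "eb (inv_word w) = - eb w" by (induction w) (auto simp: inv_word_Cons)

lemma ea_red_cons: "ea (red_cons x t) = fa x + ea t"
  by (cases t) auto
lemma eb_red_cons: "eb (red_cons x t) = fb x + eb t"
  by (cases t) auto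

lemma ea_reduce[simp]: "ea (reduce w) = ea w"
  by (induction w) (auto simp: reduce_Cons ea_red_cons)
lemma eb_reduce[simp]: "eb (reduce w) = eb w"
  by (induction w) (auto simp: reduce_Cons eb_red_cons)

lemma ea_sbst: "ea (sbst u v w) = ea w * ea u + eb w * ea v"
proof (induction w)
  case Nil thus ?case by simp
next
  case (Cons x w) thus ?case by (cases x) (auto simp: algebra_simps)
qed
lemma eb_sbst: "eb (sbst u v w) = ea w * eb u + eb w * eb v"
proof (induction w)
  case Nil thus ?case by simp
next
  case (Cons x w) thus ?case by (cases x) (auto simp: algebra_simps)
qed

lemma det_lemma:
  fixes a b c d x1 y1 x2 y2 :: int
  assumes "x1*a + y1*b = 1" "x1*c + y1*d = 0" "x2*a+y2*b = 0" "x2*c + y2*d = 1"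
  shows "(a*d - b*c)*(x1*y2 - x2*y1) = 1"
proof -
  have "(a*d - b*c)*(x1*y2 - x2*y1) = (x1*a+y1*b)*(x2*c+y2*d) - (x1*c+y1*d)*(x2*a+y2*b)"
    by (simp add: algebra_simps)
  thus ?thesis using assms by simp
qed

lemma basis_coprime:
  assumes "is_basis u v"
  shows "\<And>d. d dvd ea u \<Longrightarrow> d dvd eb u \<Longrightarrow> is_unit d"
    and "\<And>d. d dvd ea v \<Longrightarrow> d dvd eb v \<Longrightarrow> is_unit d"
proof -
  have bij: "bij_betw (endo u v) {w. reduced w} {w. reduced w}"
    using assms by (simp add: is_basis_def)
  have ra: "reduced [Ga]" and rb: "reduced [Gb]" by (auto simp: reduced_Cons)
  obtain s where s: "endo u v s = [Ga]"
    using bij ra unfolding bij_betw_def by (metis imageE mem_Collect_eq)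
  obtain t where t: "endo u v t = [Gb]"
    using bij rb unfolding bij_betw_def by (metis imageE mem_Collect_eq)
  have e1: "ea s * ea u + eb s * ea v = 1" using arg_cong[OF s, of ea]
    by (simp add: endo_sbst ea_sbst)
  have e2: "ea s * eb u + eb s * eb v = 0" using arg_cong[OF s, of eb]
    by (simp add: endo_sbst eb_sbst)
  have e3: "ea t * ea u + eb t * ea v = 0" using arg_cong[OF t, of ea]
    by (simp add: endo_sbst ea_sbst)
  have e4: "ea t * eb u + eb t * eb v = 1" using arg_cong[OF t, of eb]
    by (simp add: endo_sbst eb_sbst)
  have det: "(ea u * eb v - ea v * eb u) * (ea s * eb t - ea t * eb s) = 1"
    by (rule det_lemma[OF e1 e2 e3 e4])
  show "\<And>d. d dvd ea u \<Longrightarrow> d dvd eb u \<Longrightarrow> is_unit d"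
  proof -
    fix d assume "d dvd ea u" "d dvd eb u"
    hence "d dvd (ea u * eb v - ea v * eb u) * (ea s * eb t - ea t * eb s)" by simp
    thus "is_unit d" using det by simp
  qed
  show "\<And>d. d dvd ea v \<Longrightarrow> d dvd eb v \<Longrightarrow> is_unit d"
  proof -
    fix d assume "d dvd ea v" "d dvd eb v"
    hence "d dvd (ea u * eb v - ea v * eb u) * (ea s * eb t - ea t * eb s)" by simp
    thus "is_unit d" using det by simp
  qed
qed

lemma primitive_coprime:
  assumes "primitive w" "d dvd ea w" "d dvd eb w"
  shows "is_unit d"
  using assms basis_coprime unfolding primitive_def by blast

definition pw :: "nat \<Rightarrow> 'a list \<Rightarrow> 'a list" where "pw n s = concat (replicate n s)"

lemma pw_0[simp]: "pw 0 s = []" by (simp add: pw_def)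
lemma pw_Suc[simp]: "pw (Suc n) s = s @ pw n s" by (simp add: pw_def)
lemma pw_Suc2: "pw (Suc n) s = pw n s @ s" by (induction n) auto
lemma pw_comm: "pw n s @ s = s @ pw n s" by (metis pw_Suc pw_Suc2)
lemma inv_word_pw: "inv_word (pw n s) = pw n (inv_word s)"
  by (induction n) (auto simp: inv_word_append, metis pw_Suc pw_Suc2)
lemma sbst_pw: "sbst u v (pw n s) = pw n (sbst u v s)"
  by (induction n) auto

lemma reduce_pw_cancel1: "reduce (pw n s @ pw n (inv_word s) @ r) = reduce r"
proof (induction n arbitrary: r)
  case 0 thus ?case by simp
next
  case (Suc n)
  have "reduce (pw (Suc n) s @ pw (Suc n) (inv_word s) @ r)
      = reduce (s @ (pw n s @ pw n (inv_word s) @ (inv_word s @ r)))"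
    unfolding pw_Suc2[of n "inv_word s"] by simp
  also have "\<dots> = reduce (s @ reduce (pw n s @ pw n (inv_word s) @ (inv_word s @ r)))"
    by (rule reduce_append_right)
  also have "\<dots> = reduce (s @ inv_word s @ r)" using Suc by (simp flip: reduce_append_right)
  also have "\<dots> = reduce r" by (rule reduce_cancel1)
  finally show ?case .
qed

lemma reduce_pw_cancel2: "reduce (pw n (inv_word s) @ pw n s @ r) = reduce r"
  using reduce_pw_cancel1[of n "inv_word s" r] by simp

lemma reduce_pw_cong:
  assumes h: "reduce a = reduce b"
  shows "reduce (pw n a @ r) = reduce (pw n b @ r)"
proof (induction n arbitrary: r)
  case 0 thus ?case by simp
next
  case (Suc n)
  have "reduce (a @ (pw n a @ r)) = reduce (b @ (pw n b @ r))"
    by (rule reduce_cong[OF h Suc.IH])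
  thus ?case by simp
qed

section \<open>The witness word is primitive\<close>

definition x0 :: "nat \<Rightarrow> letter list" where "x0 P = pw P [Ga] @ [Gb]"
definition zw :: "nat \<Rightarrow> letter list" where "zw P = pw P (x0 P) @ [Ga]"
definition s0 :: "nat \<Rightarrow> letter list" where "s0 P = pw P [GbInv] @ [Ga]"
definition t0 :: "nat \<Rightarrow> letter list" where "t0 P = pw P ([GaInv] @ pw P [Gb]) @ [Gb]"

lemma reduce_single[simp]: "reduce [x] = [x]"
  by (simp add: reduce_reduced reduced_Cons)

lemma invw_Ga: "inv_word [Ga] = [GaInv]" and invw_Gb: "inv_word [Gb] = [Gb]\<Longrightarrow>False"
  and invw_GbInv: "inv_word [GbInv] = [Gb]"
  by (auto simp: inv_word_def)

lemma compA: "endo (zw P) (x0 P) (s0 P) = [Ga]"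
proof -
  have "endo (zw P) (x0 P) (s0 P) = reduce (pw P (inv_word (x0 P)) @ pw P (x0 P) @ [Ga])"
    by (simp add: endo_sbst s0_def sbst_pw zw_def)
  also have "\<dots> = [Ga]" by (simp add: reduce_pw_cancel2)
  finally show ?thesis .
qed

lemma compB: "endo (zw P) (x0 P) (t0 P) = [Gb]"
proof -
  have "endo (zw P) (x0 P) (t0 P) = reduce (pw P ([GaInv] @ pw P (inv_word (x0 P)) @ pw P (x0 P)) @ x0 P)"
    by (simp add: endo_sbst t0_def sbst_pw zw_def inv_word_append inv_word_pw invw_Ga)
  also have "\<dots> = reduce (pw P [GaInv] @ x0 P)"
  proof (rule reduce_pw_cong)
    show "reduce ([GaInv] @ pw P (inv_word (x0 P)) @ pw P (x0 P)) = reduce [GaInv]"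
      by (metis reduce_append_right reduce_pw_cancel2 append_Nil2 reduce_Nil)
  qed
  also have "\<dots> = reduce (pw P (inv_word [Ga]) @ pw P [Ga] @ [Gb])"
    by (simp add: x0_def invw_Ga)
  also have "\<dots> = [Gb]" by (simp only: reduce_pw_cancel2 reduce_single)
  finally show ?thesis .
qed

lemma inv_s0: "inv_word (s0 P) = [GaInv] @ pw P [Gb]"
  by (simp add: s0_def inv_word_append inv_word_pw invw_Ga invw_GbInv)

lemma compC: "endo (s0 P) (t0 P) (x0 P) = [Gb]"
proof -
  have "endo (s0 P) (t0 P) (x0 P) = reduce (pw P (s0 P) @ pw P (inv_word (s0 P)) @ [Gb])"
    by (simp add: endo_sbst x0_def sbst_pw t0_def inv_s0)
  also have "\<dots> = [Gb]" by (simp only: reduce_pw_cancel1 reduce_single)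
  finally show ?thesis .
qed

lemma compD: "endo (s0 P) (t0 P) (zw P) = [Ga]"
proof -
  have "endo (s0 P) (t0 P) (zw P) = reduce (pw P (sbst (s0 P) (t0 P) (x0 P)) @ s0 P)"
    by (simp add: endo_sbst zw_def sbst_pw)
  also have "\<dots> = reduce (pw P [Gb] @ s0 P)"
    by (rule reduce_pw_cong) (metis compC endo_sbst reduce_single)
  also have "\<dots> = reduce (pw P [Gb] @ pw P (inv_word [Gb]) @ [Ga])"
    by (simp add: s0_def inv_word_def)
  also have "\<dots> = [Ga]" by (simp only: reduce_pw_cancel1 reduce_single)
  finally show ?thesis .
qed

lemma positive_reduced: "set w \<subseteq> {Ga, Gb} \<Longrightarrow> reduced w"
proof (induction w)
  case Nil thus ?case by simp
next
  case (Cons x w) thus ?case by (cases w) (auto simp: reduced_Cons)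
qed

lemma set_pw: "set (pw n s) \<subseteq> set s" by (induction n) auto

lemma set_zw: "set (zw P) \<subseteq> {Ga, Gb}"
  using set_pw[of P "x0 P"] set_pw[of P "[Ga]"] by (auto simp: zw_def x0_def)

lemma zw_primitive: "primitive (zw P)"
proof -
  have "is_basis (zw P) (x0 P)"
  proof (rule basis_by_inverse[OF _ _ compA compB compD compC])
    show "reduced (zw P)" by (rule positive_reduced[OF set_zw])
    show "reduced (x0 P)" by (rule positive_reduced) (use set_pw[of P "[Ga]"] in \<open>auto simp: x0_def\<close>)
  qed
  thus ?thesis unfolding primitive_def by blast
qed



lemma pos_props: "set w \<subseteq> {Ga, Gb} \<Longrightarrow> 0 \<le> ea w \<and> 0 \<le> eb w \<and> ea w + eb w = int (length w)"
proof (induction w)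
  case Nil thus ?case by simp
next
  case (Cons c w) thus ?case by (cases c) auto
qed

lemma onlyGa: "set w \<subseteq> {Ga} \<Longrightarrow> eb w = 0"
proof (induction w)
  case Nil thus ?case by simp
next
  case (Cons c w) thus ?case by (cases c) auto
qed

lemma ea_pw: "ea (pw n s) = int n * ea s" by (induction n) (auto simp: algebra_simps)
lemma eb_pw: "eb (pw n s) = int n * eb s" by (induction n) (auto simp: algebra_simps)
lemma length_pw: "length (pw n s) = n * length s" by (induction n) auto

lemma set_x0: "set (x0 Q) \<subseteq> {Ga, Gb}"
  using set_pw[of Q "[Ga]"] by (auto simp: x0_def)

lemma split_le:
  assumes "a @ b = c @ d" "length a \<le> length c"
  shows "\<exists>r. c = a @ r \<and> b = r @ d"
proof -
  have "a = take (length a) c \<and> b = drop (length a) c @ d"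
    using assms append_eq_append_conv_if[of a b c d] by simp
  thus ?thesis by (metis append_take_drop_id)
qed

lemma prefix_bound:
  assumes "m @ y = pw k (x0 Q) @ [Ga]" "1 \<le> eb m"
  shows "Q + 1 \<le> length m"
proof (cases k)
  case 0
  have "set m \<subseteq> set (m @ y)" by auto
  with assms 0 have "set m \<subseteq> {Ga}" by simp
  thus ?thesis using onlyGa assms by simp
next
  case (Suc k')
  hence e: "m @ y = pw Q [Ga] @ ([Gb] @ pw k' (x0 Q) @ [Ga])" using assms by (simp add: x0_def)
  show ?thesis
  proof (rule ccontr)
    assume "\<not> Q + 1 \<le> length m"
    hence "length m \<le> length (pw Q [Ga])" by (simp add: length_pw)
    then obtain r2 where "pw Q [Ga] = m @ r2" using split_le[OF e] by blast
    hence "set m \<subseteq> {Ga}" using set_pw[of Q "[Ga]"] by auto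
    thus False using onlyGa assms by simp
  qed
qed

lemma infix_bound:
  assumes "u @ m @ y = pw k (x0 Q) @ [Ga]" "2 \<le> eb m"
  shows "Q + 2 \<le> length m"
  using assms
proof (induction k arbitrary: u)
  case 0
  have "set m \<subseteq> set (u @ m @ y)" by auto
  with 0 have "set m \<subseteq> {Ga}" by simp
  thus ?case using onlyGa 0 by simp
next
  case (Suc k)
  have e: "u @ (m @ y) = x0 Q @ (pw k (x0 Q) @ [Ga])" using Suc.prems by simp
  have lx: "length (x0 Q) = Q + 1" by (simp add: x0_def length_pw)
  show ?case
  proof (cases "Q + 1 \<le> length u")
    case True
    then obtain u' where "u = x0 Q @ u'" "pw k (x0 Q) @ [Ga] = u' @ (m @ y)"
      using split_le[OF e[symmetric]] lx by auto
    thus ?thesis using Suc.IH[of u'] Suc.prems(2) by metis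
  next
    case False
    then obtain r where r: "x0 Q = u @ r" "m @ y = r @ pw k (x0 Q) @ [Ga]"
      using split_le[OF e] lx by auto
    have rne: "r \<noteq> []" using r(1) lx False by auto
    have pr: "set r \<subseteq> {Ga, Gb}" "set u \<subseteq> {Ga, Gb}" using set_x0[of Q] r(1) by auto
    have ebr: "eb r \<le> 1"
    proof -
      have "eb (x0 Q) = 1" by (simp add: x0_def eb_pw)
      thus ?thesis using r(1) pos_props[OF pr(2)] by simp
    qed
    show ?thesis
    proof (cases "length m \<le> length r")
      case True
      then obtain r' where r': "r = m @ r'" using split_le[OF r(2)] by blast
      have "set r' \<subseteq> {Ga, Gb}" using pr r' by auto
      hence "0 \<le> eb r'" using pos_props by blast
      thus ?thesis using ebr Suc.prems(2) r' by simp
    next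
      case False
      then obtain m' where m': "m = r @ m'" "m' @ y = pw k (x0 Q) @ [Ga]"
        using split_le[OF r(2)[symmetric]] by auto
      have "1 \<le> eb m'" using m'(1) ebr Suc.prems(2) by simp
      hence "Q + 1 \<le> length m'" by (rule prefix_bound[OF m'(2)])
      moreover have "1 \<le> length r" using rne by (cases r) auto
      ultimately show ?thesis using m'(1) by simp
    qed
  qed
qed



datatype 'a ptree = Lf "nat + 'a" | Nd nat "'a ptree list"

fun troot :: "'a ptree \<Rightarrow> nat + 'a" where
  "troot (Lf s) = s" | "troot (Nd A ts) = Inl A"
fun fringe :: "'a ptree \<Rightarrow> (nat + 'a) list" where
  "fringe (Lf s) = [s]" | "fringe (Nd A ts) = concat (map fringe ts)"
fun tvalid :: "(nat \<times> (nat + 'a) list) set \<Rightarrow> 'a ptree \<Rightarrow> bool" where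
  "tvalid P (Lf s) = True"
| "tvalid P (Nd A ts) = ((A, map troot ts) \<in> P \<and> (\<forall>t\<in>set ts. tvalid P t))"
fun theight :: "'a ptree \<Rightarrow> nat" where
  "theight (Lf s) = 0" | "theight (Nd A ts) = Suc (foldr max (map theight ts) 0)"
fun tsize :: "'a ptree \<Rightarrow> nat" where
  "tsize (Lf s) = 1" | "tsize (Nd A ts) = Suc (sum_list (map tsize ts))"
fun tlabels :: "'a ptree \<Rightarrow> nat set" where
  "tlabels (Lf s) = {}" | "tlabels (Nd A ts) = insert A (\<Union>t\<in>set ts. tlabels t)"

datatype 'a ctx = Hole | CN nat "'a ptree list" "'a ctx" "'a ptree list"

fun plug :: "'a ctx \<Rightarrow> 'a ptree \<Rightarrow> 'a ptree" where
  "plug Hole s = s" | "plug (CN A l C r) s = Nd A (l @ [plug C s] @ r)"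
fun croot :: "'a ctx \<Rightarrow> nat + 'a \<Rightarrow> nat + 'a" where
  "croot Hole X = X" | "croot (CN A l C r) X = Inl A"
fun cvalid :: "(nat \<times> (nat + 'a) list) set \<Rightarrow> 'a ctx \<Rightarrow> nat + 'a \<Rightarrow> bool" where
  "cvalid P Hole X = True"
| "cvalid P (CN A l C r) X = ((A, map troot l @ [croot C X] @ map troot r) \<in> P \<and>
     (\<forall>t\<in>set l. tvalid P t) \<and> (\<forall>t\<in>set r. tvalid P t) \<and> cvalid P C X)"
fun lfr :: "'a ctx \<Rightarrow> (nat + 'a) list" where
  "lfr Hole = []" | "lfr (CN A l C r) = concat (map fringe l) @ lfr C"
fun rfr :: "'a ctx \<Rightarrow> (nat + 'a) list" where
  "rfr Hole = []" | "rfr (CN A l C r) = rfr C @ concat (map fringe r)"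
fun csize :: "'a ctx \<Rightarrow> nat" where
  "csize Hole = 0"
| "csize (CN A l C r) = Suc (sum_list (map tsize l) + csize C + sum_list (map tsize r))"
fun cpow :: "'a ctx \<Rightarrow> nat \<Rightarrow> 'a ptree \<Rightarrow> 'a ptree" where
  "cpow C 0 s = s" | "cpow C (Suc n) s = plug C (cpow C n s)"

lemma troot_plug: "troot (plug C s) = croot C (troot s)"
  by (induction C) auto
lemma fringe_plug: "fringe (plug C s) = lfr C @ fringe s @ rfr C"
  by (induction C) auto
lemma tvalid_plug: "tvalid P (plug C s) \<longleftrightarrow> cvalid P C (troot s) \<and> tvalid P s"
  by (induction C) (auto simp: troot_plug)
lemma tsize_plug: "tsize (plug C s) = csize C + tsize s"
  by (induction C) auto

lemma foldr_max_ge: "t \<in> set ts \<Longrightarrow> f t \<le> foldr max (map f ts) (0::nat)"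
  by (induction ts) auto
lemma foldr_max_le: "(\<And>t. t \<in> set ts \<Longrightarrow> f t \<le> k) \<Longrightarrow> foldr max (map f ts) (0::nat) \<le> k"
  by (induction ts) auto

lemma theight_plug: "theight s \<le> theight (plug C s)"
proof (induction C)
  case Hole thus ?case by simp
next
  case (CN A l C r)
  have "theight (plug C s) \<le> foldr max (map theight (l @ [plug C s] @ r)) 0"
    by (rule foldr_max_ge) simp
  thus ?case using CN by simp
qed

section \<open>Derivations vs trees\<close>

lemma steps_ctx: "(cfg_step P)\<^sup>*\<^sup>* a b \<Longrightarrow> (cfg_step P)\<^sup>*\<^sup>* (l @ a @ r) (l @ b @ r)"
proof (induction rule: rtranclp_induct)
  case base thus ?case by simp
next
  case (step y z)
  from step.hyps(2) obtain l' r' A \<alpha> where "y = l' @ [Inl A] @ r'" "(A, \<alpha>) \<in> P" "z = l' @ \<alpha> @ r'"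
    unfolding cfg_step_def by blast
  hence "cfg_step P (l @ y @ r) (l @ z @ r)"
    unfolding cfg_step_def by (rule_tac x="l @ l'" in exI, rule_tac x="r' @ r" in exI) auto
  with step.IH show ?case by (rule rtranclp.rtrancl_into_rtrancl)
qed

lemma steps_append: "(cfg_step P)\<^sup>*\<^sup>* a b \<Longrightarrow> (cfg_step P)\<^sup>*\<^sup>* c d \<Longrightarrow> (cfg_step P)\<^sup>*\<^sup>* (a @ c) (b @ d)"
  using steps_ctx[of P a b "[]" c] steps_ctx[of P c d b "[]"] by simp

lemma forest_derives:
  "(\<And>t. t \<in> set ts \<Longrightarrow> (cfg_step P)\<^sup>*\<^sup>* [troot t] (fringe t)) \<Longrightarrow>
   (cfg_step P)\<^sup>*\<^sup>* (map troot ts) (concat (map fringe ts))"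
proof (induction ts)
  case Nil thus ?case by simp
next
  case (Cons t ts)
  have "(cfg_step P)\<^sup>*\<^sup>* ([troot t] @ map troot ts) (fringe t @ concat (map fringe ts))"
    by (rule steps_append) (use Cons in auto)
  thus ?case by simp
qed

lemma ptree_derives: "tvalid P t \<Longrightarrow> (cfg_step P)\<^sup>*\<^sup>* [troot t] (fringe t)"
proof (induction t)
  case (Lf s) thus ?case by simp
next
  case (Nd A ts)
  have s1: "cfg_step P [Inl A] (map troot ts)"
    using Nd.prems unfolding cfg_step_def by (rule_tac x="[]" in exI, rule_tac x="[]" in exI) auto
  have "(cfg_step P)\<^sup>*\<^sup>* (map troot ts) (concat (map fringe ts))"
    by (rule forest_derives) (use Nd in auto)
  with s1 show ?case by (simp add: converse_rtranclp_into_rtranclp)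
qed

lemma derives_forest:
  "(cfg_step P)\<^sup>*\<^sup>* \<beta> \<gamma> \<Longrightarrow>
   \<exists>ts. map troot ts = \<beta> \<and> concat (map fringe ts) = \<gamma> \<and> (\<forall>t\<in>set ts. tvalid P t)"
proof (induction rule: converse_rtranclp_induct)
  case base
  show ?case by (rule exI[of _ "map Lf \<gamma>"]) (induction \<gamma>, auto)
next
  case (step y z)
  from step.hyps(1) obtain l r A \<alpha> where y: "y = l @ [Inl A] @ r" and P: "(A, \<alpha>) \<in> P"
      and z: "z = l @ \<alpha> @ r"
    unfolding cfg_step_def by blast
  from step.IH obtain ts where ts: "map troot ts = z" "concat (map fringe ts) = \<gamma>" "\<forall>t\<in>set ts. tvalid P t"
    by blast
  from ts(1) z have "map troot ts = l @ (\<alpha> @ r)" by simp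
  hence "\<exists>us vs. ts = us @ vs \<and> l = map troot us \<and> \<alpha> @ r = map troot vs"
    by (simp only: map_eq_append_conv)
  then obtain ts1 ts23 where "ts = ts1 @ ts23" "map troot ts1 = l" "map troot ts23 = \<alpha> @ r"
    by metis
  moreover from this(3) have "\<exists>us vs. ts23 = us @ vs \<and> \<alpha> = map troot us \<and> r = map troot vs"
    by (simp only: map_eq_append_conv)
  then obtain ts2 ts3 where "ts23 = ts2 @ ts3" "map troot ts2 = \<alpha>" "map troot ts3 = r"
    by metis
  ultimately show ?case using ts P y
    by (rule_tac x="ts1 @ [Nd A ts2] @ ts3" in exI) auto
qed

section \<open>Pumping\<close>

lemma tlabels_tvalid: "tvalid P t \<Longrightarrow> tlabels t \<subseteq> fst ` P"
proof (induction t)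
  case (Lf s) thus ?case by simp
next
  case (Nd A ts)
  have "A \<in> fst ` P" using image_eqI[of A fst "(A, map troot ts)" P] Nd.prems by simp
  moreover have "\<forall>t\<in>set ts. tlabels t \<subseteq> fst ` P" using Nd by simp
  ultimately show ?case by auto
qed

lemma find_label: "A \<in> tlabels t \<Longrightarrow> \<exists>C ts'. t = plug C (Nd A ts')"
proof (induction t)
  case (Lf s) thus ?case by simp
next
  case (Nd B ts)
  show ?case
  proof (cases "A = B")
    case True thus ?thesis by (rule_tac x=Hole in exI) auto
  next
    case False
    then obtain t where t: "t \<in> set ts" "A \<in> tlabels t" using Nd.prems by auto
    then obtain C ts' where "t = plug C (Nd A ts')" using Nd.IH by blast
    moreover obtain l r where "ts = l @ t # r" using split_list[OF t(1)] by blast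
    ultimately show ?thesis by (rule_tac x="CN B l C r" in exI) auto
  qed
qed

lemma rep:
  "finite Ns \<Longrightarrow> tlabels t \<subseteq> Ns \<Longrightarrow> card Ns < theight t \<Longrightarrow>
   \<exists>C1 C2 B ts'. t = plug C1 (plug C2 (Nd B ts')) \<and> C2 \<noteq> Hole \<and> croot C2 (Inl B) = Inl B"
proof (induction t arbitrary: Ns)
  case (Lf s) thus ?case by simp
next
  case (Nd A ts)
  show ?case
  proof (cases "\<exists>t\<in>set ts. A \<in> tlabels t")
    case True
    then obtain t where t: "t \<in> set ts" "A \<in> tlabels t" by blast
    then obtain C ts' where "t = plug C (Nd A ts')" using find_label by blast
    moreover obtain l r where "ts = l @ t # r" using split_list[OF t(1)] by blast
    ultimately show ?thesis
      by (rule_tac x=Hole in exI, rule_tac x="CN A l C r" in exI) auto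
  next
    case False
    have A: "A \<in> Ns" using Nd.prems by auto
    have cN: "0 < card Ns" using A Nd.prems(1) card_gt_0_iff by blast
    have "\<exists>t\<in>set ts. card Ns - 1 < theight t"
    proof (rule ccontr)
      assume "\<not> (\<exists>t\<in>set ts. card Ns - 1 < theight t)"
      hence "foldr max (map theight ts) 0 \<le> card Ns - 1" by (intro foldr_max_le) (auto simp: not_less)
      thus False using Nd.prems(3) cN by simp
    qed
    then obtain t where t: "t \<in> set ts" "card Ns - 1 < theight t" by blast
    have lab: "tlabels t \<subseteq> Ns - {A}" using False t Nd.prems by auto
    have "card (Ns - {A}) < theight t" using t A Nd.prems(1) by (simp add: card_Diff_singleton)
    then obtain C1 C2 B ts' where "t = plug C1 (plug C2 (Nd B ts'))" "C2 \<noteq> Hole" "croot C2 (Inl B) = Inl B"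
      using Nd.IH[OF t(1) _ lab] Nd.prems(1) by blast
    moreover obtain l r where "ts = l @ t # r" using split_list[OF t(1)] by blast
    ultimately show ?thesis
      by (rule_tac x="CN A l C1 r" in exI) auto
  qed
qed

lemma rep_low:
  "finite Ns \<Longrightarrow> tlabels t \<subseteq> Ns \<Longrightarrow> card Ns < theight t \<Longrightarrow>
   \<exists>C1 C2 B ts'. t = plug C1 (plug C2 (Nd B ts')) \<and> C2 \<noteq> Hole \<and> croot C2 (Inl B) = Inl B
      \<and> theight (plug C2 (Nd B ts')) \<le> Suc (card Ns)"
proof (induction t)
  case (Lf s) thus ?case by simp
next
  case (Nd A ts)
  show ?case
  proof (cases "\<exists>t\<in>set ts. card Ns < theight t")
    case True
    then obtain t where t: "t \<in> set ts" "card Ns < theight t" by blast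
    have "tlabels t \<subseteq> Ns" using t Nd.prems by auto
    then obtain C1 C2 B ts' where "t = plug C1 (plug C2 (Nd B ts'))" "C2 \<noteq> Hole"
       "croot C2 (Inl B) = Inl B" "theight (plug C2 (Nd B ts')) \<le> Suc (card Ns)"
      using Nd.IH[OF t(1)] Nd.prems(1) t(2) by blast
    moreover obtain l r where "ts = l @ t # r" using split_list[OF t(1)] by blast
    ultimately show ?thesis
      by (rule_tac x="CN A l C1 r" in exI) auto
  next
    case False
    hence "theight (Nd A ts) \<le> Suc (card Ns)"
      using foldr_max_le[of ts theight "card Ns"] by (simp add: not_less)
    moreover obtain C1 C2 B ts' where "Nd A ts = plug C1 (plug C2 (Nd B ts'))" "C2 \<noteq> Hole"
       "croot C2 (Inl B) = Inl B"
      using rep[OF Nd.prems] by blast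
    ultimately show ?thesis using theight_plug[of "plug C2 (Nd B ts')" C1]
      by (rule_tac x=C1 in exI, rule_tac x=C2 in exI, rule_tac x=B in exI, rule_tac x=ts' in exI) auto
  qed
qed

lemma fringe_bound:
  assumes m: "\<forall>(A,\<alpha>)\<in>P. length \<alpha> \<le> m" "1 \<le> m"
  shows "tvalid P t \<Longrightarrow> length (fringe t) \<le> m ^ theight t"
proof (induction t)
  case (Lf s) thus ?case by simp
next
  case (Nd A ts)
  let ?h = "foldr max (map theight ts) 0"
  have "length (fringe (Nd A ts)) = sum_list (map (\<lambda>t. length (fringe t)) ts)"
    by (simp add: length_concat comp_def)
  also have "\<dots> \<le> sum_list (map (\<lambda>t. m ^ ?h) ts)"
  proof (rule sum_list_mono)
    fix t assume t: "t \<in> set ts"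
    have "length (fringe t) \<le> m ^ theight t" using Nd t by auto
    also have "\<dots> \<le> m ^ ?h" by (rule power_increasing[OF foldr_max_ge[OF t, of theight] m(2)])
    finally show "length (fringe t) \<le> m ^ ?h" .
  qed
  also have "\<dots> = length ts * m ^ ?h" by (simp add: sum_list_triv)
  also have "\<dots> \<le> m * m ^ ?h"
  proof -
    have "length ts = length (map troot ts)" by simp
    also have "\<dots> \<le> m" using m(1) Nd.prems by auto
    finally show ?thesis by simp
  qed
  finally show ?case by simp
qed

lemma cpow_props:
  assumes "cvalid P C X" "croot C X = X" "tvalid P s" "troot s = X"
  shows "tvalid P (cpow C n s) \<and> troot (cpow C n s) = X"
  by (induction n) (use assms in \<open>auto simp: tvalid_plug troot_plug\<close>)

lemma fringe_cpow: "fringe (cpow C n s) = pw n (lfr C) @ fringe s @ pw n (rfr C)"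
  by (induction n) (auto simp: fringe_plug pw_comm)

lemma map_pw: "map f (pw n v) = pw n (map f v)"
  by (induction n) auto

lemma map_split5:
  assumes "map f w = a1 @ a2 @ a3 @ a4 @ a5"
  shows "\<exists>u v x y z. w = u @ v @ x @ y @ z \<and> map f u = a1 \<and> map f v = a2 \<and> map f x = a3
     \<and> map f y = a4 \<and> map f z = a5"
proof -
  have sp: "\<And>w a b. map f w = a @ b \<Longrightarrow> \<exists>u v. w = u @ v \<and> map f u = a \<and> map f v = b"
    by (simp add: map_eq_append_conv) blast
  obtain u r1 where 1: "w = u @ r1" "map f u = a1" "map f r1 = a2 @ a3 @ a4 @ a5"
    using sp[OF assms] by blast
  obtain v r2 where 2: "r1 = v @ r2" "map f v = a2" "map f r2 = a3 @ a4 @ a5"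
    using sp[OF 1(3)] by blast
  obtain x r3 where 3: "r2 = x @ r3" "map f x = a3" "map f r3 = a4 @ a5"
    using sp[OF 2(3)] by blast
  obtain y z where 4: "r3 = y @ z" "map f y = a4" "map f z = a5"
    using sp[OF 3(3)] by blast
  show ?thesis using 1 2 3 4 by blast
qed

lemma pumping:
  assumes fin: "finite P"
  shows "\<exists>p. \<forall>w \<in> cfg_lang P S. p < length w \<longrightarrow>
    (\<exists>u v x y z. w = u @ v @ x @ y @ z \<and> v @ y \<noteq> [] \<and> length (v @ x @ y) \<le> p \<and>
       (\<forall>i. u @ pw i v @ x @ pw i y @ z \<in> cfg_lang P S))"
proof -
  define m where "m = 2 + (\<Sum>e\<in>P. length (snd e))"
  define Ns where "Ns = fst ` P"
  have finN: "finite Ns" using fin by (simp add: Ns_def)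
  have m1: "1 \<le> m" and m2: "2 \<le> m" by (auto simp: m_def)
  have mb: "\<forall>(A,\<alpha>)\<in>P. length \<alpha> \<le> m"
  proof clarify
    fix A \<alpha> assume "(A, \<alpha>) \<in> P"
    hence "length (snd (A, \<alpha>)) \<le> (\<Sum>e\<in>P. length (snd e))"
      using fin by (intro member_le_sum) auto
    thus "length \<alpha> \<le> m" by (simp add: m_def)
  qed
  show ?thesis
  proof (rule exI[of _ "m ^ Suc (card Ns)"], intro ballI impI)
    fix w assume wL: "w \<in> cfg_lang P S" and wlen: "m ^ Suc (card Ns) < length w"
    let ?Q = "\<lambda>t. tvalid P t \<and> troot t = Inl S \<and> fringe t = map Inr w"
    from wL have "(cfg_step P)\<^sup>*\<^sup>* [Inl S] (map Inr w)" by (simp add: cfg_lang_def)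
    from derives_forest[OF this] obtain ts where "map troot ts = [Inl S] \<and> concat (map fringe ts) = map Inr w
        \<and> (\<forall>t\<in>set ts. tvalid P t)"
      by (rule exE)
    hence ts: "map troot ts = [Inl S]" "concat (map fringe ts) = map Inr w" "\<forall>t\<in>set ts. tvalid P t"
      by auto
    then obtain t1 where "?Q t1" by (cases ts) auto
    then obtain t where Qt: "?Q t" and tmin: "\<And>t'. ?Q t' \<Longrightarrow> tsize t \<le> tsize t'"
      using ex_has_least_nat[of ?Q t1 tsize] by blast
    have "card Ns < theight t"
    proof (rule ccontr)
      assume "\<not> card Ns < theight t"
      hence "length w \<le> m ^ card Ns"
        using fringe_bound[OF mb m1, of t] Qt power_increasing[OF _ m1, of "theight t" "card Ns"]
        by (metis length_map not_le order_trans)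
      moreover have "m ^ card Ns < m ^ Suc (card Ns)" using m2 by simp
      ultimately show False using wlen by simp
    qed
    moreover have "tlabels t \<subseteq> Ns" using tlabels_tvalid Qt by (auto simp: Ns_def)
    ultimately obtain C1 C2 B ts' where dec: "t = plug C1 (plug C2 (Nd B ts'))" and C2: "C2 \<noteq> Hole"
       and cr: "croot C2 (Inl B) = Inl B" and hgt: "theight (plug C2 (Nd B ts')) \<le> Suc (card Ns)"
      using rep_low[OF finN] by blast
    define s where "s = Nd B ts'"
    have vC1: "cvalid P C1 (Inl B)" and vC2: "cvalid P C2 (Inl B)" and vs: "tvalid P s"
      using Qt dec cr by (auto simp: tvalid_plug troot_plug s_def)
    have rt: "croot C1 (Inl B) = Inl S" using Qt dec cr by (simp add: troot_plug)
    have fr: "map Inr w = lfr C1 @ lfr C2 @ fringe s @ rfr C2 @ rfr C1"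
      using Qt dec by (simp add: fringe_plug s_def)
    then obtain u v x y z where wd: "w = u @ v @ x @ y @ z" and mu: "map Inr u = lfr C1"
      and mv: "map Inr v = lfr C2" and mx: "map Inr x = fringe s" and my: "map Inr y = rfr C2"
      and mz: "map Inr z = rfr C1"
      using map_split5[of Inr w] by metis
    show "\<exists>u v x y z. w = u @ v @ x @ y @ z \<and> v @ y \<noteq> [] \<and> length (v @ x @ y) \<le> m ^ Suc (card Ns) \<and>
       (\<forall>i. u @ pw i v @ x @ pw i y @ z \<in> cfg_lang P S)"
    proof (intro exI conjI allI)
      show "w = u @ v @ x @ y @ z" by (rule wd)
      show "v @ y \<noteq> []"
      proof
        assume "v @ y = []"
        hence e: "lfr C2 = []" "rfr C2 = []" using mv my by auto
        have "?Q (plug C1 s)"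
          using vC1 vs rt fr e by (simp add: tvalid_plug troot_plug fringe_plug s_def)
        hence "tsize t \<le> tsize (plug C1 s)" by (rule tmin)
        moreover have "csize C2 \<noteq> 0" using C2 by (cases C2) auto
        ultimately show False using dec by (simp add: tsize_plug s_def)
      qed
      have "length (v @ x @ y) = length (fringe (plug C2 s))"
        using mv mx my by (simp add: fringe_plug flip: mv mx my)
      also have "\<dots> \<le> m ^ theight (plug C2 s)"
        using fringe_bound[OF mb m1] vC2 vs by (simp add: tvalid_plug s_def)
      also have "\<dots> \<le> m ^ Suc (card Ns)" using power_increasing[OF hgt m1] by (simp add: s_def)
      finally show "length (v @ x @ y) \<le> m ^ Suc (card Ns)" .
      fix i
      have cp: "tvalid P (cpow C2 i s) \<and> troot (cpow C2 i s) = Inl B"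
        using cpow_props[OF vC2 cr vs] by (simp add: s_def)
      hence "tvalid P (plug C1 (cpow C2 i s))" "troot (plug C1 (cpow C2 i s)) = Inl S"
        using vC1 rt by (auto simp: tvalid_plug troot_plug)
      hence "(cfg_step P)\<^sup>*\<^sup>* [Inl S] (fringe (plug C1 (cpow C2 i s)))"
        using ptree_derives by metis
      moreover have "fringe (plug C1 (cpow C2 i s)) = map Inr (u @ pw i v @ x @ pw i y @ z)"
        by (simp add: fringe_plug fringe_cpow map_pw mu mv mx my mz)
      ultimately show "u @ pw i v @ x @ pw i y @ z \<in> cfg_lang P S"
        by (simp add: cfg_lang_def)
    qed
  qed
qed



lemma length_zw: "length (zw Q) = Q * (Q + 1) + 1"
  by (simp add: zw_def x0_def length_pw)

lemma ea_zw: "ea (zw Q) = int Q * int Q + 1" and eb_zw: "eb (zw Q) = int Q"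
  by (simp_all add: zw_def x0_def ea_pw eb_pw)

lemma beta0_case:
  fixes Q a :: nat
  assumes Q: "prime Q" and a: "1 \<le> a" "a < Q"
  shows "\<exists>j. Q dvd 1 + j * a"
proof -
  have Q2: "2 \<le> Q" using prime_ge_2_nat[OF Q] .
  have nd: "\<not> Q dvd a" using a by (auto dest: dvd_imp_le)
  have f: "[a ^ (Q - 1) = 1] (mod Q)" by (rule fermat_theorem[OF Q nd])
  have qq: "Q - 1 = Suc (Q - 2)" using Q2 by simp
  have pa: "a ^ (Q - 1) = a ^ (Q - 2) * a" unfolding qq by (simp add: power_Suc2)
  have e1: "1 + (Q - 1) * a ^ (Q - 2) * a = 1 + (Q - 1) * a ^ (Q - 1)"
    unfolding pa by (simp add: mult.assoc)
  have c0: "[1 + (Q - 1) * a ^ (Q - 1) = 1 + (Q - 1) * 1] (mod Q)"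
    by (intro cong_add cong_mult cong_refl f)
  have eQ: "1 + (Q - 1) * 1 = Q" using Q2 by simp
  have c1: "[1 + (Q - 1) * a ^ (Q - 2) * a = Q] (mod Q)"
    using c0 unfolding e1 eQ .
  have c2: "[Q = 0] (mod Q)" by (simp add: cong_def)
  have "[1 + (Q - 1) * a ^ (Q - 2) * a = 0] (mod Q)" by (rule cong_trans[OF c1 c2])
  thus ?thesis by (auto simp: cong_0_iff)
qed

theorem mainTheorem13:
  shows "\<not> context_free primitive_reduced_words"
proof
  assume "context_free primitive_reduced_words"
  then obtain P S where fin: "finite P" and L: "primitive_reduced_words = cfg_lang P S"
    unfolding context_free_def by blast
  obtain p where pump: "\<forall>w \<in> cfg_lang P S. p < length w \<longrightarrow>
    (\<exists>u v x y z. w = u @ v @ x @ y @ z \<and> v @ y \<noteq> [] \<and> length (v @ x @ y) \<le> p \<and>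
       (\<forall>i. u @ pw i v @ x @ pw i y @ z \<in> cfg_lang P S))"
    using pumping[OF fin] by blast
  obtain Q :: nat where Q: "prime Q" "p < Q" using bigger_prime by blast
  have Q2: "2 \<le> Q" using prime_ge_2_nat[OF Q(1)] .
  have zL: "zw Q \<in> cfg_lang P S"
    using L zw_primitive positive_reduced[OF set_zw] unfolding primitive_reduced_words_def by blast
  have zlen: "p < length (zw Q)" using Q(2) by (simp add: length_zw)
  obtain u v x y z where d: "zw Q = u @ v @ x @ y @ z" "v @ y \<noteq> []" "length (v @ x @ y) \<le> p"
    "\<forall>i. u @ pw i v @ x @ pw i y @ z \<in> cfg_lang P S"
    using pump[rule_format, OF zL zlen] by (elim exE conjE) (rule that, assumption+)
  have pos: "set u \<subseteq> {Ga,Gb}" "set v \<subseteq> {Ga,Gb}" "set x \<subseteq> {Ga,Gb}" "set y \<subseteq> {Ga,Gb}"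
    "set z \<subseteq> {Ga,Gb}"
    using set_zw[of Q] d(1) by auto
  define \<alpha> where "\<alpha> = ea (v @ y)"
  define \<beta> where "\<beta> = eb (v @ y)"
  have vy: "set (v @ y) \<subseteq> {Ga, Gb}" using pos by auto
  have ab: "0 \<le> \<alpha>" "0 \<le> \<beta>" "\<alpha> + \<beta> = int (length (v @ y))"
    using pos_props[OF vy] by (auto simp: \<alpha>_def \<beta>_def)
  have l1: "1 \<le> length (v @ y)" using d(2) by (cases "v @ y") auto
  have l2: "length (v @ y) \<le> p" using d(3) by simp
  have b1: "\<beta> \<le> 1"
  proof (rule ccontr)
    assume "\<not> \<beta> \<le> 1"
    hence "2 \<le> eb (v @ x @ y)" using pos_props[OF pos(3)] by (simp add: \<beta>_def)
    moreover have "u @ (v @ x @ y) @ z = pw Q (x0 Q) @ [Ga]" using d(1) by (simp add: zw_def)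
    ultimately have "Q + 2 \<le> length (v @ x @ y)" using infix_bound by blast
    thus False using d(3) Q(2) by simp
  qed
  have key: "\<And>j c. c dvd (int Q * int Q + 1 + int j * \<alpha>) \<Longrightarrow> c dvd (int Q + int j * \<beta>) \<Longrightarrow> is_unit c"
  proof -
    fix j and c :: int
    assume c: "c dvd (int Q * int Q + 1 + int j * \<alpha>)" "c dvd (int Q + int j * \<beta>)"
    let ?W = "u @ pw (Suc j) v @ x @ pw (Suc j) y @ z"
    have "?W \<in> cfg_lang P S" by (rule d(4)[rule_format])
    hence "?W \<in> primitive_reduced_words" using L by (simp only:)
    hence pW: "primitive ?W" by (simp add: primitive_reduced_words_def)
    have eW: "ea ?W = ea (zw Q) + int j * \<alpha>"
    proof -
      have "ea ?W = ea u + ea v + ea x + ea y + ea z + int j * (ea v + ea y)"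
        by (simp add: ea_pw algebra_simps)
      also have "\<dots> = ea (zw Q) + int j * \<alpha>" by (simp add: d(1) \<alpha>_def)
      finally show ?thesis .
    qed
    have eW2: "eb ?W = eb (zw Q) + int j * \<beta>"
    proof -
      have "eb ?W = eb u + eb v + eb x + eb y + eb z + int j * (eb v + eb y)"
        by (simp add: eb_pw algebra_simps)
      also have "\<dots> = eb (zw Q) + int j * \<beta>" by (simp add: d(1) \<beta>_def)
      finally show ?thesis .
    qed
    have c1: "c dvd ea ?W" by (subst eW, subst ea_zw, rule c(1))
    have c2: "c dvd eb ?W" by (subst eW2, subst eb_zw, rule c(2))
    show "is_unit c" by (rule primitive_coprime[OF pW c1 c2])
  qed
  show False
  proof (cases "\<beta> = 0")
    case True
    define a where "a = nat \<alpha>"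
    have a: "1 \<le> a" "a < Q" using ab l1 l2 Q(2) True by (auto simp: a_def)
    obtain j where j: "Q dvd 1 + j * a" using beta0_case[OF Q(1) a] by blast
    have aa: "\<alpha> = int a" using ab(1) by (simp add: a_def)
    have "Q dvd Q * Q + (1 + j * a)" by (rule dvd_add[OF dvd_triv_left j])
    hence dq: "int Q dvd int (Q * Q + (1 + j * a))" by (simp only: int_dvd_int_iff)
    have eq: "int (Q * Q + (1 + j * a)) = int Q * int Q + 1 + int j * \<alpha>"
      by (simp add: aa)
    have "int Q dvd int Q * int Q + 1 + int j * \<alpha>" using dq unfolding eq .
    moreover have "int Q dvd int Q + int j * \<beta>" using True by simp
    ultimately have "is_unit (int Q)" by (rule key)
    hence "int Q \<le> 1" using zdvd_imp_le by simp
    thus False using Q2 by simp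
  next
    case False
    hence b: "\<beta> = 1" using b1 ab(2) by simp
    have "int (length (v @ y)) \<le> int p" using l2 by (simp only: of_nat_le_iff)
    moreover have "int p < int Q" using Q(2) by (simp only: of_nat_less_iff)
    ultimately have al: "\<alpha> + 2 \<le> int Q" using ab(3) b by linarith
    define D where "D = int Q * int Q + 1 - int Q * \<alpha>"
    have DQ: "1 \<le> D - int Q"
    proof -
      have "D - int Q = int Q * (int Q - 1 - \<alpha>) + 1" by (simp add: D_def algebra_simps)
      moreover have "0 \<le> int Q * (int Q - 1 - \<alpha>)" using al by simp
      ultimately show ?thesis by simp
    qed
    define j where "j = nat (D - int Q)"
    have ij: "int j = D - int Q" using DQ by (simp add: j_def)
    have "D dvd int Q * int Q + 1 + int j * \<alpha>"
    proof -
      have "int Q * int Q + 1 + int j * \<alpha> = D * (1 + \<alpha>)" by (simp add: ij D_def algebra_simps)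
      thus ?thesis by simp
    qed
    moreover have "D dvd int Q + int j * \<beta>" using b ij by simp
    ultimately have "is_unit D" by (rule key)
    hence "D \<le> 1" using zdvd_imp_le by simp
    thus False using DQ Q2 by linarith
  qed
qed


end
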